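(* Let $M\ge 4N-2$. Then for a generic $M$-element frame $\mathcal F=\{f_1,\dots,f_M\}$ for $\mathbb C^N$, the map $\mathbb M^{\mathcal F}$ is injective, i.e. $|\langle x,f_k\rangle|=|\langle y,f_k\rangle|$ for all $k$ implies $y=cx$ for some $c\in\mathbb C$ with $|c|=1$.
   Context: An $M$-element frame for $\mathbb C^N$ is a spanning family $\{f_1,\dots,f_M\}\subset\mathbb C^N$, with $\langle x,y\rangle=\sum_k x_k\overline{y_k}$; "generic" means for all frames in an open dense subset of the set of such frames (topology induced from the range of coefficients $W=\{(\langle x,f_k\rangle)_k\}$ in the complex Grassmannian $Gr(N,M)^{\mathbb C}$). $\mathbb M^{\mathcal F}:\mathbb C^N/\mathbb T^1\to\mathbb R^M$, $\hat x\mapsto(|\langle x,f_k\rangle|)_k$, where $x\sim y$ iff $y=cx$ with $|c|=1$. *)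

theory Defs
  imports "HOL-Analysis.Analysis"
begin

definition cinner :: "complex ^ 'n \<Rightarrow> complex ^ 'n \<Rightarrow> complex" where
  "cinner x y = (\<Sum>i\<in>UNIV. x $ i * cnj (y $ i))"

text \<open>An M-element family in C^N is encoded as F :: complex^'n^'m, with f_k = F $ k.
  It is a frame iff it spans C^N over the complex numbers.\<close>
definition is_frame :: "complex ^ 'n ^ 'm \<Rightarrow> bool" where
  "is_frame F \<longleftrightarrow> (\<forall>y::complex ^ 'n. \<exists>c::'m \<Rightarrow> complex. y = (\<Sum>k\<in>UNIV. c k *s F $ k))"

definition frames :: "(complex ^ 'n ^ 'm) set" where
  "frames = {F. is_frame F}"

text \<open>Analysis operator and its range W (a point of the Grassmannian).\<close>
definition analysis :: "complex ^ 'n ^ 'm \<Rightarrow> complex ^ 'n \<Rightarrow> complex ^ 'm" where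
  "analysis F x = (\<chi> k. cinner x (F $ k))"

definition coeff_range :: "complex ^ 'n ^ 'm \<Rightarrow> (complex ^ 'm) set" where
  "coeff_range F = range (analysis F)"

definition magnitude_injective :: "complex ^ 'n ^ 'm \<Rightarrow> bool" where
  "magnitude_injective F \<longleftrightarrow>
     (\<forall>x y. (\<forall>k. cmod (cinner x (F $ k)) = cmod (cinner y (F $ k)))
        \<longrightarrow> (\<exists>c. cmod c = 1 \<and> y = c *s x))"

text \<open>A property holds for generic frames iff it holds on an open dense subset of the frames,
  in the topology induced from the Grassmannian via F \<mapsto> coeff_range F.  With the
  Grassmannian carrying the quotient topology of full-rank matrices modulo GL_N, the open
  sets of this induced topology are exactly the (Euclidean) open subsets of the frames
  that are saturated, i.e. depend only on coeff_range F; density w.r.t. saturated opens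
  is equivalent to Euclidean density (saturations of opens are open).\<close>
definition generic_frames :: "(complex ^ 'n ^ 'm \<Rightarrow> bool) \<Rightarrow> bool" where
  "generic_frames P \<longleftrightarrow>
     (\<exists>S. S \<subseteq> frames \<and> openin (top_of_set frames) S
        \<and> (\<forall>F\<in>frames. \<forall>G\<in>frames. coeff_range F = coeff_range G \<longrightarrow> (F \<in> S \<longleftrightarrow> G \<in> S))
        \<and> frames \<subseteq> closure S
        \<and> (\<forall>F\<in>S. P F))"

end

theory Submission
  imports Defs
begin


lemma cinner_scale_left: "cinner (c *s x) y = c * cinner x y"
  by (simp add: cinner_def sum_distrib_left mult.assoc)
lemma cinner_scale_right: "cinner x (c *s y) = cnj c * cinner x y"
  by (simp add: cinner_def sum_distrib_left algebra_simps)
lemma cinner_add_left: "cinner (x + y) z = cinner x z + cinner y z"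
  by (simp add: cinner_def sum.distrib algebra_simps)
lemma cinner_diff_left: "cinner (x - y) z = cinner x z - cinner y z"
  by (simp add: cinner_def sum_subtractf algebra_simps)
lemma cinner_add_right: "cinner z (x + y) = cinner z x + cinner z y"
  by (simp add: cinner_def sum.distrib algebra_simps)
lemma cinner_diff_right: "cinner z (x - y) = cinner z x - cinner z y"
  by (simp add: cinner_def sum_subtractf algebra_simps)
lemma vec_scaleR_c: "(r *\<^sub>R (x::complex^'n)) $ i = of_real r * x $ i"
  by (subst vector_scaleR_component) (simp add: scaleR_conv_of_real)
lemma cinner_scaleR_left: "cinner (r *\<^sub>R x) y = of_real r * cinner x y"
  by (simp only: cinner_def vec_scaleR_c sum_distrib_left mult.assoc)
lemma cinner_scaleR_right: "cinner x (r *\<^sub>R y) = of_real r * cinner x y"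
  by (simp only: cinner_def vec_scaleR_c sum_distrib_left complex_cnj_mult complex_cnj_complex_of_real mult.assoc mult.left_commute)
lemma cinner_commute: "cinner y x = cnj (cinner x y)"
  by (simp add: cinner_def mult.commute)
lemma cinner_zero_left[simp]: "cinner 0 y = 0" by (simp add: cinner_def)
lemma cinner_zero_right[simp]: "cinner y 0 = 0" by (simp add: cinner_def)
lemma inner_cinner: "inner x y = Re (cinner x y)"
  by (simp add: inner_vec_def cinner_def inner_complex_def Re_sum)
lemma cinner_self: "cinner x x = of_real ((norm x)\<^sup>2)"
proof -
  have "cinner x x = (\<Sum>i\<in>UNIV. of_real ((cmod (x$i))\<^sup>2))"
    unfolding cinner_def by (rule sum.cong, simp, rule complex_norm_square[symmetric])
  also have "\<dots> = of_real (\<Sum>i\<in>UNIV. (norm (x$i))\<^sup>2)" by (simp only: of_real_sum)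
  also have "(\<Sum>i\<in>UNIV. (norm (x$i))\<^sup>2) = (norm x)\<^sup>2"
    by (simp add: norm_vec_def L2_set_def sum_nonneg)
  finally show ?thesis .
qed
lemma cinner_sum_right: "cinner x (\<Sum>k\<in>A. f k) = (\<Sum>k\<in>A. cinner x (f k))"
  by (induction A rule: infinite_finite_induct) (auto simp: cinner_add_right)
lemma cinner_self_eq_0: "cinner x x = 0 \<longleftrightarrow> x = 0"
  by (simp add: cinner_self)

lemma frame_orth_zero:
  assumes "is_frame F" "\<And>k. cinner x (F $ k) = 0"
  shows "x = 0"
proof -
  obtain c where c: "x = (\<Sum>k\<in>UNIV. c k *s F $ k)" using assms(1) unfolding is_frame_def by blast
  have "cinner x x = (\<Sum>k\<in>UNIV. cinner x (c k *s F $ k))" by (subst (2) c) (rule cinner_sum_right)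
  also have "\<dots> = 0" by (simp add: cinner_scale_right assms(2))
  finally show ?thesis by (simp add: cinner_self_eq_0)
qed

lemma analysis_scale: "analysis F (c *s x) = c *s analysis F x"
  by (simp add: analysis_def vec_eq_iff cinner_scale_left)

lemma frame_analysis_inj:
  assumes "is_frame F" "analysis F x = analysis F y"
  shows "x = y"
proof -
  have "\<And>k. cinner (x - y) (F $ k) = 0"
    using assms(2) by (simp add: analysis_def vec_eq_iff cinner_diff_left)
  then show ?thesis using frame_orth_zero[OF assms(1)] by force
qed

lemma nonframe_orth:
  assumes "\<not> is_frame (F :: complex^'n^'m)"
  obtains x where "x \<noteq> 0" "\<And>k. cinner x (F $ k) = 0"
proof -
  define W where "W = range (\<lambda>c::'m \<Rightarrow> complex. (\<Sum>k\<in>UNIV. c k *s F $ k))"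
  have sub: "subspace W"
    unfolding subspace_def W_def
  proof (intro conjI ballI allI)
    show "0 \<in> range (\<lambda>c::'m \<Rightarrow> complex. (\<Sum>k\<in>UNIV. c k *s F $ k))"
      by (rule image_eqI[where x="\<lambda>_. 0"]) auto
  next
    fix u v assume "u \<in> range (\<lambda>c::'m \<Rightarrow> complex. (\<Sum>k\<in>UNIV. c k *s F $ k))"
      "v \<in> range (\<lambda>c::'m \<Rightarrow> complex. (\<Sum>k\<in>UNIV. c k *s F $ k))"
    then obtain a b where "u = (\<Sum>k\<in>UNIV. a k *s F $ k)" "v = (\<Sum>k\<in>UNIV. b k *s F $ k)" by auto
    then show "u + v \<in> range (\<lambda>c::'m \<Rightarrow> complex. (\<Sum>k\<in>UNIV. c k *s F $ k))"
      by (intro image_eqI[where x="\<lambda>k. a k + b k"]) (auto simp: sum.distrib vector_sadd_rdistrib)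
  next
    fix r :: real and u assume "u \<in> range (\<lambda>c::'m \<Rightarrow> complex. (\<Sum>k\<in>UNIV. c k *s F $ k))"
    then obtain a where "u = (\<Sum>k\<in>UNIV. a k *s F $ k)" by auto
    then show "r *\<^sub>R u \<in> range (\<lambda>c::'m \<Rightarrow> complex. (\<Sum>k\<in>UNIV. c k *s F $ k))"
      by (intro image_eqI[where x="\<lambda>k. of_real r * a k"])
         (auto simp: vec_eq_iff sum_component scaleR_sum_right scaleR_conv_of_real[where 'a=complex] mult.assoc sum_distrib_left)
  qed
  have "W \<noteq> UNIV" using assms unfolding is_frame_def W_def by auto
  moreover have "span W = W" using sub by (simp add: span_eq_iff)
  ultimately have "span W \<subset> span UNIV" by (metis span_UNIV subset_UNIV psubsetI)
  then obtain x where x: "x \<noteq> 0" "\<And>y. y \<in> span W \<Longrightarrow> orthogonal x y"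
    by (rule orthogonal_to_subspace_exists_gen) blast
  have "cinner x (F $ k) = 0" for k
  proof -
    have m1: "c *s F $ k \<in> W" for c
      unfolding W_def by (rule image_eqI[where x="\<lambda>j. if j = k then c else 0"])
        (auto simp: vec_eq_iff sum_component if_distrib[where f="\<lambda>a. a * _"] sum.delta' cong: if_cong)
    have "Re (cinner x (F $ k)) = 0"
      using x(2)[OF span_base[OF m1[of 1]]] by (simp add: orthogonal_def inner_cinner)
    moreover have "Re (cinner x (\<i> *s F $ k)) = 0"
      using x(2)[OF span_base[OF m1[of \<i>]]] by (simp add: orthogonal_def inner_cinner)
    ultimately show ?thesis by (simp add: cinner_scale_right complex_eq_iff)
  qed
  then show ?thesis using x(1) that by blast
qed

lemma maginj_frame:
  assumes "magnitude_injective F" shows "is_frame F"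
proof (rule ccontr)
  assume nf: "\<not> is_frame F"
  obtain x where x: "x \<noteq> 0" "\<And>k. cinner x (F $ k) = 0" using nonframe_orth[OF nf] by blast
  then obtain c where "cmod c = 1" "0 = c *s x"
    using assms unfolding magnitude_injective_def by (metis cinner_zero_left norm_zero)
  then show False using x(1) by (auto simp: vec_eq_iff)
qed

definition magW :: "(complex^'m) set \<Rightarrow> bool" where
  "magW W \<longleftrightarrow> (\<forall>u\<in>W. \<forall>v\<in>W. (\<forall>k. cmod (u $ k) = cmod (v $ k)) \<longrightarrow> (\<exists>c. cmod c = 1 \<and> v = c *s u))"

lemma maginj_magW:
  assumes "is_frame F" shows "magnitude_injective F \<longleftrightarrow> magW (coeff_range F)"
proof
  assume L: "magnitude_injective F"
  show "magW (coeff_range F)" unfolding magW_def coeff_range_def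
  proof (intro ballI impI)
    fix u v assume "u \<in> range (analysis F)" "v \<in> range (analysis F)" "\<forall>k. cmod (u $ k) = cmod (v $ k)"
    then obtain x y where xy: "u = analysis F x" "v = analysis F y" "\<forall>k. cmod (cinner x (F$k)) = cmod (cinner y (F$k))"
      by (auto simp: analysis_def)
    then obtain c where "cmod c = 1" "y = c *s x" using L unfolding magnitude_injective_def by blast
    then show "\<exists>c. cmod c = 1 \<and> v = c *s u" using xy by (auto simp: analysis_scale)
  qed
next
  assume R: "magW (coeff_range F)"
  show "magnitude_injective F" unfolding magnitude_injective_def
  proof (intro allI impI)
    fix x y assume "\<forall>k. cmod (cinner x (F $ k)) = cmod (cinner y (F $ k))"
    then have "\<forall>k. cmod (analysis F x $ k) = cmod (analysis F y $ k)" by (simp add: analysis_def)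
    then obtain c where c: "cmod c = 1" "analysis F y = c *s analysis F x"
      using R unfolding magW_def coeff_range_def by blast
    then have "y = c *s x" using frame_analysis_inj[OF assms] by (simp add: analysis_scale)
    then show "\<exists>c. cmod c = 1 \<and> y = c *s x" using c by blast
  qed
qed


lemma scaleR_as_s: "r *\<^sub>R (v::complex^'n) = complex_of_real r *s v"
  by (simp only: vec_eq_iff vec_scaleR_c vector_smult_component) simp

lemma re_cnj_0_cmod: "Re (a * cnj b) = 0 \<Longrightarrow> cmod (a + b) = cmod (a - b)"
proof -
  assume h: "Re (a * cnj b) = 0"
  have "(cmod (a + b))\<^sup>2 = (cmod (a - b))\<^sup>2"
    using h unfolding cmod_power2 by (simp add: power2_eq_square algebra_simps)
  then show ?thesis by (simp add: power2_eq_iff_nonneg)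
qed

lemma cmod_eq_re: "cmod a = cmod b \<Longrightarrow> Re ((a + b) * cnj (a - b)) = 0"
proof -
  assume h: "cmod a = cmod b"
  then have "(cmod a)\<^sup>2 = (cmod b)\<^sup>2" by simp
  then show ?thesis unfolding cmod_power2 by (simp add: power2_eq_square algebra_simps)
qed

definition Kset :: "((complex^'n) \<times> (complex^'n)) set" where
  "Kset = {p. norm (fst p) = 1 \<and> norm (snd p) = 1 \<and> Im (cinner (snd p) (fst p)) = 0}"

definition cond :: "complex^'n^'m \<Rightarrow> complex^'n \<Rightarrow> complex^'n \<Rightarrow> bool" where
  "cond F s d \<longleftrightarrow> (\<forall>k. Re (cinner s (F$k) * cnj (cinner d (F$k))) = 0)"

lemma equiv_contra:
  fixes p c :: complex
  assumes "Im p = 0" "cmod c = 1" "1 - p/2 = c * (1 + p/2)" "p - 1/2 = c * (p + 1/2)"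
  shows False
proof -
  obtain r where r: "p = of_real r" using assms(1) by (metis complex_is_Real_iff Reals_cases)
  obtain a b where c: "c = Complex a b" by (metis complex.exhaust)
  have ab: "a\<^sup>2 + b\<^sup>2 = 1" using assms(2) c by (simp add: cmod_def)
  have e1: "1 - r/2 = a * (1 + r/2)" "0 = b * (1 + r/2)"
    using assms(3) unfolding r c by (simp_all add: complex_eq_iff)
  have e2: "r - 1/2 = a * (r + 1/2)" "0 = b * (r + 1/2)"
    using assms(4) unfolding r c by (simp_all add: complex_eq_iff)
  show False
  proof (cases "b = 0")
    case True
    then have "a = 1 \<or> a = -1" using ab by (simp add: power2_eq_1_iff)
    then show False using e1 e2 by auto
  next
    case False
    then show False using e1(2) e2(2) by simp
  qed
qed

lemma cond_imp_bad:
  assumes "(s, d) \<in> Kset" "cond F s d"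
  shows "\<not> magnitude_injective F"
proof
  assume mi: "magnitude_injective F"
  define h where "h = complex_of_real (1/2)"
  define x where "x = s + h *s d"
  define y where "y = s - h *s d"
  have "cmod (cinner x (F$k)) = cmod (cinner y (F$k))" for k
  proof -
    have "Re (cinner s (F$k) * cnj (cinner d (F$k))) = 0"
      using assms(2) unfolding cond_def by simp
    then have "Re (cinner s (F$k) * cnj (h * cinner d (F$k))) = 0"
      unfolding h_def by simp
    then have "cmod (cinner s (F$k) + h * cinner d (F$k)) = cmod (cinner s (F$k) - h * cinner d (F$k))"
      by (rule re_cnj_0_cmod)
    then show ?thesis unfolding x_def y_def
      by (simp only: cinner_add_left cinner_diff_left cinner_scale_left)
  qed
  then obtain c where c: "cmod c = 1" "y = c *s x" using mi unfolding magnitude_injective_def by blast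
  have n: "cinner s s = 1" "cinner d d = 1" "Im (cinner d s) = 0"
    using assms(1) by (simp_all add: Kset_def cinner_self)
  have ds: "cinner s d = cinner d s"
    using n(3) cinner_commute[of s d] by (simp add: complex_eq_iff)
  have e1: "cinner y s = c * cinner x s" "cinner y d = c * cinner x d"
    using c by (simp_all add: cinner_scale_left)
  have "cinner y s = 1 - h * cinner d s" "cinner x s = 1 + h * cinner d s"
    "cinner y d = cinner d s - h" "cinner x d = cinner d s + h"
    unfolding x_def y_def using n ds
    by (simp_all only: cinner_add_left cinner_diff_left cinner_scale_left mult_1_right)
  then have "1 - cinner d s/2 = c * (1 + cinner d s/2)" "cinner d s - 1/2 = c * (cinner d s + 1/2)"
    using e1 unfolding h_def by (simp_all add: field_simps)
  then show False using equiv_contra n(3) c(1) by blast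
qed

lemma norm_scale_c: "norm (complex_of_real r *s (v::complex^'n)) = \<bar>r\<bar> * norm v"
  by (simp flip: scaleR_as_s)

lemma Re_ofreal_mult: "Re (complex_of_real r * z) = r * Re z" by simp

lemma cond_scale_left: "cond F s d \<Longrightarrow> cond F (complex_of_real r *s s) d"
  by (simp only: cond_def cinner_scale_left mult.assoc Re_ofreal_mult) simp
lemma cond_scale_right: "cond F s d \<Longrightarrow> cond F s (complex_of_real r *s d)"
  by (simp only: cond_def cinner_scale_left complex_cnj_mult complex_cnj_complex_of_real
     mult.left_commute[of _ "complex_of_real r"] Re_ofreal_mult) simp

lemma bad_imp_cond:
  assumes "\<not> magnitude_injective F"
  shows "\<exists>p\<in>Kset. cond F (fst p) (snd p)"
proof -
  obtain x y where xy: "\<And>k. cmod (cinner x (F $ k)) = cmod (cinner y (F $ k))"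
    and ne: "\<And>c. cmod c = 1 \<Longrightarrow> y \<noteq> c *s x"
    using assms unfolding magnitude_injective_def by blast
  define h where "h = complex_of_real (1/2)"
  define s0 where "s0 = h *s (x + y)"
  define d0 where "d0 = x - y"
  have c0: "cond F s0 d0" unfolding cond_def
  proof
    fix k
    have "Re ((cinner x (F$k) + cinner y (F$k)) * cnj (cinner x (F$k) - cinner y (F$k))) = 0"
      using xy[of k] by (rule cmod_eq_re)
    then show "Re (cinner s0 (F $ k) * cnj (cinner d0 (F $ k))) = 0"
      unfolding s0_def d0_def h_def
      by (simp only: cinner_scale_left cinner_add_left cinner_diff_left mult.assoc Re_ofreal_mult)
  qed
  have s0nz: "s0 \<noteq> 0"
  proof
    assume "s0 = 0"
    then have "y = (-1) *s x" unfolding s0_def h_def by (auto simp: vec_eq_iff add_eq_0_iff)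
    then show False using ne[of "-1"] by simp
  qed
  define s where "s = complex_of_real (1 / norm s0) *s s0"
  have ns: "norm s = 1" using s0nz unfolding s_def by (simp only: norm_scale_c) simp
  have c1: "cond F s d0" unfolding s_def by (rule cond_scale_left[OF c0])
  have ss: "cinner s s = 1" using ns by (simp add: cinner_self)
  define \<rho> where "\<rho> = Im (cinner d0 s)"
  define d1 where "d1 = d0 - (\<i> * of_real \<rho>) *s s"
  have im1: "Im (cinner d1 s) = 0"
    unfolding d1_def \<rho>_def by (simp add: cinner_diff_left cinner_scale_left ss)
  have c2: "cond F s d1" unfolding cond_def
  proof
    fix k
    have "Re (cinner s (F$k) * cnj (cinner d0 (F$k))) = 0" using c1 unfolding cond_def by simp
    moreover have "Re (cinner s (F$k) * cnj (\<i> * of_real \<rho> * cinner s (F$k))) = 0"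
      by (simp add: algebra_simps)
    ultimately show "Re (cinner s (F$k) * cnj (cinner d1 (F$k))) = 0"
      unfolding d1_def by (simp add: cinner_diff_left cinner_scale_left ring_distribs)
  qed
  have d1nz: "d1 \<noteq> 0"
  proof
    assume "d1 = 0"
    then have "d0 = (\<i> * of_real \<rho>) *s s" unfolding d1_def by simp
    then have eq: "x - y = (\<i> * of_real (\<rho> / (2 * norm s0))) *s (x + y)"
      unfolding d0_def s_def s0_def h_def by (simp add: vec_eq_iff ac_simps)
    define t where "t = \<rho> / (2 * norm s0)"
    have nz: "1 + \<i> * of_real t \<noteq> 0" by (simp add: complex_eq_iff)
    have "(1 + \<i> * of_real t) *s y = (1 - \<i> * of_real t) *s x"
      using eq unfolding t_def[symmetric] by (simp add: vec_eq_iff algebra_simps)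
    then have "y = ((1 - \<i> * of_real t) / (1 + \<i> * of_real t)) *s x"
      using nz by (simp add: vec_eq_iff field_simps)
    moreover have "cmod ((1 - \<i> * of_real t) / (1 + \<i> * of_real t)) = 1"
    proof -
      have "cmod (1 - \<i> * of_real t) = cmod (1 + \<i> * of_real t)" by (simp add: cmod_def)
      then show ?thesis using nz by (simp add: norm_divide)
    qed
    ultimately show False using ne by blast
  qed
  define d where "d = complex_of_real (1 / norm d1) *s d1"
  have nd: "norm d = 1" using d1nz unfolding d_def by (simp only: norm_scale_c) simp
  have c3: "cond F s d" unfolding d_def by (rule cond_scale_right[OF c2])
  have im: "Im (cinner d s) = 0" unfolding d_def using im1 by (simp add: cinner_scale_left)
  show ?thesis using ns nd im c3 by (intro bexI[where x="(s,d)"]) (auto simp: Kset_def)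
qed



lemma cont_cinner [continuous_intros]:
  assumes "continuous_on S f" "continuous_on S g"
  shows "continuous_on S (\<lambda>q. cinner (f q) (g q))"
  unfolding cinner_def
  by (intro continuous_intros assms)

lemma compact_Kset: "compact Kset"
proof (subst compact_eq_bounded_closed, rule conjI)
  show "bounded Kset" unfolding bounded_iff Kset_def
    by (rule exI[where x=2]) (auto simp: norm_Pair intro: less_imp_le[OF sqrt2_less_2])
  have "closed {p::(complex^'n)\<times>(complex^'n). norm (fst p) = 1 \<and> norm (snd p) = 1 \<and> Im (cinner (snd p) (fst p)) = 0}"
    by (intro closed_Collect_conj closed_Collect_eq continuous_intros)
  then show "closed (Kset :: ((complex^'n)\<times>(complex^'n)) set)" by (simp add: Kset_def)
qed

lemma closed_bad: "closed {F :: complex^'n^'m. \<not> magnitude_injective F}"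
proof -
  define T where "T = {q :: ((complex^'n)\<times>(complex^'n)) \<times> (complex^'n^'m). cond (snd q) (fst (fst q)) (snd (fst q))}"
  have cT: "closed T" unfolding T_def cond_def
    by (intro closed_Collect_all closed_Collect_eq continuous_intros)
  have "{F :: complex^'n^'m. \<not> magnitude_injective F} = {F. \<exists>p. p \<in> Kset \<and> (p, F) \<in> T}"
  proof (intro set_eqI iffI; simp)
    fix F :: "complex^'n^'m" assume "\<not> magnitude_injective F"
    then obtain p where "p \<in> Kset" "cond F (fst p) (snd p)" using bad_imp_cond by blast
    then show "\<exists>a b. (a, b) \<in> Kset \<and> ((a, b), F) \<in> T" unfolding T_def by (intro exI[of _ "fst p"] exI[of _ "snd p"]) simp
  next
    fix F :: "complex^'n^'m" assume "\<exists>a b. (a, b) \<in> Kset \<and> ((a, b), F) \<in> T"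
    then obtain a b where "(a, b) \<in> Kset" "cond F a b" unfolding T_def by auto
    then show "\<not> magnitude_injective F" by (rule cond_imp_bad)
  qed
  then show ?thesis using closed_compact_projection[OF compact_Kset cT] by simp
qed



lemma diff_bl: "bounded_linear h \<Longrightarrow> f differentiable (at x) \<Longrightarrow> (\<lambda>x. h (f x)) differentiable (at x)"
  by (rule differentiable_compose[where f=h]) (auto intro: bounded_linear_imp_differentiable)

lemma diff_cart:
  fixes f :: "'a::euclidean_space \<Rightarrow> complex^'n^'m"
  assumes "\<And>k t. (\<lambda>G. f G $ k $ t) differentiable (at G0)"
  shows "f differentiable (at G0)"
proof -
  have "\<forall>b\<in>Basis. (\<lambda>x. f x \<bullet> b) differentiable (at G0 within UNIV)"
  proof
    fix b :: "complex^'n^'m" assume "b \<in> Basis"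
    then obtain k v where v: "v \<in> Basis" "b = axis k v" by (auto simp: Basis_vec_def)
    then obtain t u where u: "u \<in> Basis" "v = axis t u" by (auto simp: Basis_vec_def)
    have "(\<lambda>x. f x \<bullet> b) = (\<lambda>x. (f x $ k $ t) \<bullet> u)" using v u by (simp add: inner_axis)
    moreover have "(\<lambda>x. (f x $ k $ t) \<bullet> u) differentiable (at G0)"
      by (rule diff_bl[OF bounded_linear_inner_left assms])
    ultimately show "(\<lambda>x. f x \<bullet> b) differentiable (at G0 within UNIV)" by simp
  qed
  then show ?thesis using differentiable_componentwise_within[of f G0 UNIV] by simp
qed

lemma d_nth2: "(\<lambda>G::complex^'n^'m. G $ a $ b) differentiable (at G0)"
  by (rule bounded_linear_imp_differentiable)
     (rule bounded_linear_compose[OF bounded_linear_vec_nth bounded_linear_vec_nth])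

lemma d_Re: "f differentiable (at x) \<Longrightarrow> (\<lambda>x. Re (f x)) differentiable (at x)"
  by (rule diff_bl[OF bounded_linear_Re])
lemma d_Im: "f differentiable (at x) \<Longrightarrow> (\<lambda>x. Im (f x)) differentiable (at x)"
  by (rule diff_bl[OF bounded_linear_Im])
lemma d_ofreal: "f differentiable (at x) \<Longrightarrow> (\<lambda>x. complex_of_real (f x)) differentiable (at x)"
  by (rule diff_bl[OF bounded_linear_of_real])
lemma d_cnj: "f differentiable (at x) \<Longrightarrow> (\<lambda>x. cnj (f x)) differentiable (at x)"
  by (rule diff_bl[OF bounded_linear_cnj])
lemma d_exp0: "exp differentiable (at (z::complex))"
proof -
  have "(exp has_field_derivative exp z) (at z)" by (rule DERIV_exp)
  then have "exp field_differentiable (at z)" unfolding field_differentiable_def by blast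
  then show ?thesis by (rule field_differentiable_imp_differentiable)
qed
lemma d_exp: "(f :: _ \<Rightarrow> complex) differentiable (at x) \<Longrightarrow> (\<lambda>x. exp (f x)) differentiable (at x)"
  by (rule differentiable_compose[where f=exp, OF d_exp0])
lemma d_Complex: "f differentiable (at x) \<Longrightarrow> g differentiable (at x) \<Longrightarrow>
   (\<lambda>x. Complex (f x) (g x)) differentiable (at x)"
  unfolding Complex_eq by (intro differentiable_add differentiable_mult differentiable_const d_ofreal)

definition Pj :: "'n \<Rightarrow> ('n \<times> bool \<times> bool) set" where
  "Pj j = UNIV - {(j,False,False),(j,False,True),(j,True,True)}"

definition par :: "('n \<times> bool \<times> bool \<Rightarrow> 'm) \<Rightarrow> ('m \<Rightarrow> 'n) \<Rightarrow> complex^'n^'m \<Rightarrow> 'n \<times> bool \<times> bool \<Rightarrow> real" where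
  "par e i G p = Im (G $ e p $ i (e p))"

definition xv :: "'n \<Rightarrow> ('n \<times> bool \<times> bool \<Rightarrow> 'm) \<Rightarrow> ('m \<Rightarrow> 'n) \<Rightarrow> complex^'n^'m \<Rightarrow> complex^'n" where
  "xv j e i G = (\<chi> t. if t = j then 1 else Complex (par e i G (t,False,False)) (par e i G (t,False,True)))"

definition yv :: "'n \<Rightarrow> ('n \<times> bool \<times> bool \<Rightarrow> 'm) \<Rightarrow> ('m \<Rightarrow> 'n) \<Rightarrow> complex^'n^'m \<Rightarrow> complex^'n" where
  "yv j e i G = (\<chi> t. Complex (par e i G (t,True,False)) (if t = j then 0 else par e i G (t,True,True)))"

definition cc :: "('m \<Rightarrow> 'n) \<Rightarrow> complex^'n^'m \<Rightarrow> 'm \<Rightarrow> complex" where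
  "cc i G k = exp (\<i> * complex_of_real (Re (G $ k $ i k)))"

definition wv where
  "wv j e i G k = xv j e i G - cc i G k *s yv j e i G"

definition gv :: "('m \<Rightarrow> 'n) \<Rightarrow> complex^'n^'m \<Rightarrow> 'm \<Rightarrow> complex^'n" where
  "gv i G k = (\<chi> t. if t = i k then 0 else G $ k $ t)"

definition Phi :: "'n \<Rightarrow> ('n \<times> bool \<times> bool \<Rightarrow> 'm) \<Rightarrow> ('m \<Rightarrow> 'n) \<Rightarrow> complex^'n^'m \<Rightarrow> complex^'n^'m" where
  "Phi j e i G = (\<chi> k. cinner (wv j e i G k) (wv j e i G k) *s gv i G k
                       - cinner (gv i G k) (wv j e i G k) *s wv j e i G k)"

lemma d_par: "(\<lambda>G. par e i G p) differentiable (at G0)"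
  unfolding par_def by (intro d_Im d_nth2)

lemma d_xv: "(\<lambda>G. xv j e i G $ t) differentiable (at G0)"
  by (cases "t = j") (simp_all add: xv_def d_Complex d_par)

lemma d_yv: "(\<lambda>G. yv j e i G $ t) differentiable (at G0)"
  by (cases "t = j") (simp_all add: yv_def d_Complex d_par)

lemma d_cc: "(\<lambda>G. cc i G k) differentiable (at G0)"
  unfolding cc_def by (intro d_exp differentiable_mult differentiable_const d_ofreal d_Re d_nth2)

lemma d_wv: "(\<lambda>G. wv j e i G k $ t) differentiable (at G0)"
  unfolding wv_def by (simp add: d_xv d_yv d_cc)

lemma d_gv: "(\<lambda>G. gv i G k $ t) differentiable (at G0)"
  by (cases "t = i k") (simp_all add: gv_def d_nth2)

lemma d_cinner:
  assumes "\<And>t. (\<lambda>G. u G $ t) differentiable (at G0)" "\<And>t. (\<lambda>G. v G $ t) differentiable (at G0)"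
  shows "(\<lambda>G. cinner (u G) (v G)) differentiable (at G0)"
  unfolding cinner_def by (intro differentiable_sum ballI finite differentiable_mult assms d_cnj)

lemma d_Phi: "Phi j e i differentiable (at G0)"
proof (rule diff_cart)
  fix k t
  show "(\<lambda>G. Phi j e i G $ k $ t) differentiable (at G0)"
    unfolding Phi_def
    by (simp add: d_cinner d_wv d_gv)
qed

lemma negl_Phi:
  "negligible (Phi j e i ` {G::complex^'n^'m. Im (G $ k0 $ i k0) = 0})"
proof (rule negligible_differentiable_image_negligible)
  let ?a = "axis k0 (axis (i k0) \<i>) :: complex^'n^'m"
  have "{G::complex^'n^'m. Im (G $ k0 $ i k0) = 0} = {G. ?a \<bullet> G = 0}"
    by (auto simp: inner_commute[of ?a] inner_axis inner_complex_def)
  moreover have "?a \<noteq> 0" by (simp add: axis_eq_0_iff)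
  ultimately show "negligible {G::complex^'n^'m. Im (G $ k0 $ i k0) = 0}"
    using negligible_hyperplane[of ?a 0] by simp
  show "Phi j e i differentiable_on {G. Im (G $ k0 $ i k0) = 0}"
    unfolding differentiable_on_def using d_Phi differentiable_at_withinI by blast
qed simp



lemma cover:
  fixes F :: "complex^'n^'m"
  assumes inj: "inj_on e (Pj j)" and k0: "k0 \<notin> e ` Pj j"
    and xj: "x $ j = 1" and yj: "Im (y $ j) = 0"
    and ck: "\<And>k. cinner x (F$k) = exp (\<i> * of_real (\<theta> k)) * cinner y (F$k)"
    and wi: "\<And>k. (x - exp (\<i> * of_real (\<theta> k)) *s y) $ i k \<noteq> 0"
  shows "F \<in> Phi j e i ` {G. Im (G $ k0 $ i k0) = 0}"
proof -
  define w where "w k = x - exp (\<i> * of_real (\<theta> k)) *s y" for k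
  define val where "val p = (case p of (t,b,im) \<Rightarrow> (if im then Im else Re) ((if b then y else x) $ t))" for p
  define g' where "g' k = (1 / cinner (w k) (w k)) *s (F$k - ((F$k$(i k)) / (w k $ i k)) *s w k)" for k
  define G :: "complex^'n^'m" where "G = (\<chi> k. \<chi> t. if t = i k then Complex (\<theta> k)
        (if k \<in> e ` Pj j then val (inv_into (Pj j) e k) else 0) else g' k $ t)"
  have hG: "Im (G $ k0 $ i k0) = 0" using k0 by (simp add: G_def)
  have hpar: "par e i G p = val p" if "p \<in> Pj j" for p
    using that inj by (simp add: par_def G_def)
  have "(j,True,False) \<in> Pj j" "\<And>t. t \<noteq> j \<Longrightarrow> (t,b,c) \<in> Pj j" for b c by (auto simp: Pj_def)
  note inP = this
  have hx: "xv j e i G = x"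
    by (simp add: vec_eq_iff xv_def hpar inP val_def xj complex_eq_iff)
  have hy: "yv j e i G = y"
    by (auto simp: vec_eq_iff yv_def hpar inP val_def yj complex_eq_iff)
  have hc: "cc i G k = exp (\<i> * of_real (\<theta> k))" for k by (simp add: cc_def G_def)
  have hw: "wv j e i G k = w k" for k by (simp add: wv_def hx hy hc w_def)
  have hg: "gv i G k = g' k" for k
  proof -
    have "w k $ i k \<noteq> 0" using wi[of k] unfolding w_def .
    then show ?thesis by (auto simp: vec_eq_iff gv_def G_def g'_def)
  qed
  have "Phi j e i G $ k = F $ k" for k
  proof -
    have wnz: "w k \<noteq> 0" using wi[of k] unfolding w_def by auto
    then have nw: "cinner (w k) (w k) \<noteq> 0" by (simp add: cinner_self_eq_0)
    have ortho: "cinner (F$k) (w k) = 0"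
      using ck[of k] by (subst cinner_commute) (simp add: w_def cinner_diff_left cinner_scale_left)
    define a where "a = (F$k$(i k)) / (w k $ i k)"
    define g where "g = F$k - a *s w k"
    have "cinner g (w k) = - a * cinner (w k) (w k)"
      unfolding g_def by (simp add: cinner_diff_left cinner_scale_left ortho)
    then have "cinner (g' k) (w k) = - a"
      using nw by (simp add: g'_def g_def[symmetric] a_def[symmetric] cinner_scale_left)
    moreover have "cinner (w k) (w k) *s g' k = g"
      using nw by (simp add: g'_def g_def[symmetric] a_def[symmetric] vec_eq_iff)
    ultimately show ?thesis
      by (simp add: Phi_def hw hg g_def vec_eq_iff)
  qed
  then have "Phi j e i G = F" by (simp add: vec_eq_iff)
  then show ?thesis using hG by blast
qed

lemma cinner_scale_cmod: "cmod (cinner (a *s x) f) = cmod a * cmod (cinner x f)"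
  by (simp add: cinner_scale_left norm_mult)

lemma exp_Arg: "cmod z = 1 \<Longrightarrow> exp (\<i> * complex_of_real (Arg z)) = z"
proof -
  assume h: "cmod z = 1"
  then have "z \<noteq> 0" by auto
  then have "cis (Arg z) = sgn z" by (rule cis_Arg)
  then show ?thesis using h by (simp add: cis_conv_exp sgn_div_norm)
qed

lemma witness_nz:
  fixes F :: "complex^'n^'m"
  assumes xy: "\<And>k. cmod (cinner x (F $ k)) = cmod (cinner y (F $ k))"
    and ne: "\<And>c. cmod c = 1 \<Longrightarrow> y \<noteq> c *s x"
    and xnz: "x \<noteq> 0"
  shows "\<exists>j x y \<theta> i. x$j = 1 \<and> Im (y$j) = 0
     \<and> (\<forall>k. cinner x (F$k) = exp (\<i> * of_real (\<theta> k)) * cinner y (F$k))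
     \<and> (\<forall>k. (x - exp (\<i> * of_real (\<theta> k)) *s y) $ i k \<noteq> 0)"
proof -
  obtain j where xj: "x $ j \<noteq> 0" using xnz by (auto simp: vec_eq_iff)
  define x1 where "x1 = (1 / x$j) *s x"
  define y1 where "y1 = (1 / x$j) *s y"
  define u where "u = (if y1$j = 0 then 1 else cnj (y1$j) / of_real (cmod (y1$j)))"
  have u1: "cmod u = 1" by (simp add: u_def norm_divide)
  define y2 where "y2 = u *s y1"
  have x1j: "x1 $ j = 1" using xj by (simp add: x1_def)
  have y2j: "Im (y2 $ j) = 0"
  proof (cases "y1$j = 0")
    case True then show ?thesis by (simp add: y2_def u_def)
  next
    case False
    have "Im (cnj z / complex_of_real r * z) = 0" for z r
      by (simp add: Im_divide algebra_simps)
    then show ?thesis using False by (simp add: y2_def u_def)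
  qed
  have mag: "cmod (cinner x1 (F$k)) = cmod (cinner y2 (F$k))" for k
    using xy[of k] u1 by (simp add: x1_def y2_def y1_def cinner_scale_cmod norm_divide)
  have ne2: "y2 \<noteq> c *s x1" if "cmod c = 1" for c
  proof
    assume h: "y2 = c *s x1"
    have "y = (c / u) *s x"
    proof -
      have "y = (x$j / u) *s y2" using xj u1 by (auto simp: y2_def y1_def vec_eq_iff)
      also have "\<dots> = (c / u) *s x" using xj by (simp add: h x1_def vec_eq_iff)
      finally show ?thesis .
    qed
    moreover have "cmod (c / u) = 1" using that u1 by (simp add: norm_divide)
    ultimately show False using ne by blast
  qed
  define c where "c k = (if cinner y2 (F$k) = 0 then 1 else cinner x1 (F$k) / cinner y2 (F$k))" for k
  have c1: "cmod (c k) = 1" for k using mag[of k] by (simp add: c_def norm_divide)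
  have ceq: "cinner x1 (F$k) = c k * cinner y2 (F$k)" for k
    using mag[of k] by (auto simp: c_def)
  define \<theta> where "\<theta> k = Arg (c k)" for k
  have et: "exp (\<i> * of_real (\<theta> k)) = c k" for k using c1 by (simp add: \<theta>_def exp_Arg)
  have "\<exists>t. (x1 - c k *s y2) $ t \<noteq> 0" for k
  proof (rule ccontr)
    assume "\<not> (\<exists>t. (x1 - c k *s y2) $ t \<noteq> 0)"
    then have "x1 = c k *s y2" by (auto simp: vec_eq_iff)
    then have "y2 = (1 / c k) *s x1" using c1[of k] by (auto simp: vec_eq_iff)
    moreover have "cmod (1 / c k) = 1" using c1[of k] by (simp add: norm_divide)
    ultimately show False using ne2 by blast
  qed
  then obtain i where i: "\<And>k. (x1 - c k *s y2) $ i k \<noteq> 0" by metis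
  show ?thesis
    by (rule exI[of _ j], rule exI[of _ x1], rule exI[of _ y2], rule exI[of _ \<theta>], rule exI[of _ i])
       (use i in \<open>simp add: x1j y2j et ceq\<close>)
qed

lemma bad_witness:
  fixes F :: "complex^'n^'m"
  assumes "\<not> magnitude_injective F"
  shows "\<exists>j x y \<theta> i. x$j = 1 \<and> Im (y$j) = 0
     \<and> (\<forall>k. cinner x (F$k) = exp (\<i> * of_real (\<theta> k)) * cinner y (F$k))
     \<and> (\<forall>k. (x - exp (\<i> * of_real (\<theta> k)) *s y) $ i k \<noteq> 0)"
proof -
  obtain x y where xy: "\<And>k. cmod (cinner x (F $ k)) = cmod (cinner y (F $ k))"
    and ne: "\<And>c. cmod c = 1 \<Longrightarrow> y \<noteq> c *s x"
    using assms unfolding magnitude_injective_def by blast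
  show ?thesis
  proof (cases "x = 0")
    case False then show ?thesis using witness_nz[OF xy ne] by blast
  next
    case True
    then have ynz: "y \<noteq> 0" using ne[of 1] by auto
    have ne': "x \<noteq> c *s y" if "cmod c = 1" for c
    proof
      assume "x = c *s y"
      then have "c *s y = 0" using True by simp
      then show False using that ynz by (auto simp: vec_eq_iff)
    qed
    show ?thesis using witness_nz[of y F x, OF xy[symmetric] ne' ynz] by blast
  qed
qed

lemma exists_e:
  assumes "CARD('m::finite) \<ge> 4 * CARD('n::finite) - 2"
  shows "\<exists>(e :: 'n \<times> bool \<times> bool \<Rightarrow> 'm) k0. inj_on e (Pj j) \<and> k0 \<notin> e ` Pj j"
proof -
  have cU: "card (UNIV :: ('n \<times> bool \<times> bool) set) = 4 * CARD('n)"
    by (simp add: UNIV_Times_UNIV[symmetric] card_cartesian_product del: UNIV_Times_UNIV)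
  have "card {(j,False,False),(j,False,True),(j,True,True)} = 3" by simp
  then have cP: "card (Pj j) = 4 * CARD('n) - 3"
    unfolding Pj_def by (subst card_Diff_subset) (auto simp: cU)
  obtain k0 :: 'm where True by simp
  have cB: "card (UNIV - {k0}) = CARD('m) - 1" by (simp add: card_Diff_subset)
  have "CARD('n) \<ge> 1" using finite_UNIV_card_ge_0[where 'a='n] by simp
  then have "card (Pj j) \<le> card (UNIV - {k0})" using assms cP cB by linarith
  then obtain e where e: "e ` Pj j \<subseteq> UNIV - {k0}" "inj_on e (Pj j)"
    using card_le_inj[of "Pj j" "UNIV - {k0}"] by auto
  then show ?thesis by blast
qed

lemma negl_bad:
  assumes "CARD('m::finite) \<ge> 4 * CARD('n::finite) - 2"
  shows "negligible {F :: complex^'n^'m. \<not> magnitude_injective F}"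
proof -
  have "\<forall>j. \<exists>(e :: 'n \<times> bool \<times> bool \<Rightarrow> 'm) k0. inj_on e (Pj j) \<and> k0 \<notin> e ` Pj j"
    using exists_e[OF assms] by blast
  from choice[OF this] obtain E :: "'n \<Rightarrow> 'n \<times> bool \<times> bool \<Rightarrow> 'm" where E: "\<forall>j. \<exists>k0. inj_on (E j) (Pj j) \<and> k0 \<notin> E j ` Pj j" by blast
  from choice[OF E] obtain K0 :: "'n \<Rightarrow> 'm" where "\<forall>j. inj_on (E j) (Pj j) \<and> K0 j \<notin> E j ` Pj j" by blast
  then have EK: "\<And>j. inj_on (E j) (Pj j)" "\<And>j. K0 j \<notin> E j ` Pj j" by auto
  have sub: "{F :: complex^'n^'m. \<not> magnitude_injective F} \<subseteq>
     \<Union> ((\<lambda>(j,i). Phi j (E j) i ` {G. Im (G $ K0 j $ i (K0 j)) = 0}) ` UNIV)"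
  proof
    fix F :: "complex^'n^'m" assume "F \<in> {F. \<not> magnitude_injective F}"
    then obtain j x y \<theta> i where w: "x$j = 1" "Im (y$j) = 0"
      "\<And>k. cinner x (F$k) = exp (\<i> * of_real (\<theta> k)) * cinner y (F$k)"
      "\<And>k. (x - exp (\<i> * of_real (\<theta> k)) *s y) $ i k \<noteq> 0"
      using bad_witness by blast
    have "F \<in> Phi j (E j) i ` {G. Im (G $ K0 j $ i (K0 j)) = 0}"
      by (rule cover[OF EK(1) EK(2) w])
    then show "F \<in> \<Union> ((\<lambda>(j,i). Phi j (E j) i ` {G. Im (G $ K0 j $ i (K0 j)) = 0}) ` UNIV)"
      by blast
  qed
  have "negligible (\<Union> ((\<lambda>(j,i). Phi j (E j) i ` {G. Im (G $ K0 j $ i (K0 j)) = 0}) ` (UNIV :: ('n \<times> ('m \<Rightarrow> 'n)) set)))"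
    by (rule negligible_Union) (auto simp: negl_Phi)
  then show ?thesis using sub negligible_subset by blast
qed

theorem theorem3p3:
  assumes "CARD('m::finite) \<ge> 4 * CARD('n::finite) - 2"
  shows "generic_frames (magnitude_injective :: complex ^ 'n ^ 'm \<Rightarrow> bool)"
proof -
  define S where "S = {F :: complex^'n^'m. magnitude_injective F}"
  have Sf: "S \<subseteq> frames" unfolding S_def frames_def using maginj_frame by blast
  have "open {F :: complex^'n^'m. \<not> \<not> magnitude_injective F}" by (rule open_Collect_neg[OF closed_bad])
  then have oS: "open S" unfolding S_def by simp
  have "openin (top_of_set frames) (frames \<inter> S)" using oS by blast
  moreover have "frames \<inter> S = S" using Sf by blast
  ultimately have o: "openin (top_of_set frames) S" by simp
  have sat: "\<forall>F\<in>frames. \<forall>G\<in>frames. coeff_range F = coeff_range G \<longrightarrow> (F \<in> S \<longleftrightarrow> G \<in> S)"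
  proof (intro ballI impI)
    fix F G :: "complex^'n^'m" assume "F \<in> frames" "G \<in> frames" "coeff_range F = coeff_range G"
    then show "(F \<in> S \<longleftrightarrow> G \<in> S)"
      unfolding S_def frames_def using maginj_magW[of F] maginj_magW[of G] by simp
  qed
  have "interior (- S) = {}"
  proof (rule ccontr)
    assume "interior (- S) \<noteq> {}"
    moreover have "negligible (interior (- S))"
      using negl_bad[OF assms] interior_subset[of "- S"] negligible_subset
      unfolding S_def by (metis Collect_neg_eq)
    ultimately show False using open_not_negligible[OF open_interior] by blast
  qed
  then have "closure S = UNIV" by (simp add: closure_interior)
  then have "frames \<subseteq> closure S" by simp
  moreover have "\<forall>F\<in>S. magnitude_injective F" unfolding S_def by simp
  ultimately show ?thesis unfolding generic_frames_def using Sf o sat by blast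
qed

end
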